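(* Let $t<k$ and $n>2k-t$. Let $\delta$ be a $t$-space and $\pi$ a $k$-space in $\mathrm{PG}(n,q)$ with $\dim(\pi\cap\delta)=t-1$. Let $S_1$ be the set of all $k$-spaces in $\langle\pi,\delta\rangle$, let $S_2$ be the set of all $k$-spaces containing $\delta$ and meeting $\langle\pi,\delta\rangle$ in at least a $(t+1)$-space, and let $\mathcal{S}=S_1\cup S_2$. Then $\mathcal{S}$ is a maximal set of $k$-spaces in $\mathrm{PG}(n,q)$ pairwise intersecting in at least a $t$-space, and \[|\mathcal{S}|=\theta_{k+1}-\theta_{k-t}+\left[{n-t\atop k-t}\right]_q-q^{(k-t+1)(k-t)}\left[{n-k-1\atop k-t}\right]_q=\theta_{k+1}+\sum_{j=0}^{k-t-2}\left[{k-t+1\atop j+1}\right]_q q^{(k-t-j)(k-t-j-1)}\left[{n-k-1\atop k-t-j-1}\right]_q.\]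
   Context: $k$-spaces are projective subspaces of dimension $k$; "intersecting in at least a $t$-space" means the intersection has projective dimension at least $t$. Maximal means no further $k$-space can be added while keeping the property. $\left[{n\atop k}\right]_q=\frac{(q^n-1)\cdots(q^{n-k+1}-1)}{(q^k-1)\cdots(q-1)}$ for $k>0$, $=1$ for $k=0$; $\theta_m=\frac{q^{m+1}-1}{q-1}$. *)

theory Defs
  imports "HOL-Analysis.Analysis"
begin

text \<open>PG(n,q) is modelled by the vector space 'a^'n over a finite field 'a with
  q = CARD('a) and n = CARD('n) - 1.  A projective k-space is a vector subspace of
  (vector) dimension k+1.\<close>

definition kspace :: "nat \<Rightarrow> ('a::field ^ 'n) set \<Rightarrow> bool" where
  "kspace k S \<longleftrightarrow> vec.subspace S \<and> vec.dim S = k + 1"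

definition meet_atleast :: "nat \<Rightarrow> ('a::field ^ 'n) set \<Rightarrow> ('a ^ 'n) set \<Rightarrow> bool" where
  "meet_atleast t A B \<longleftrightarrow> vec.dim (A \<inter> B) \<ge> t + 1"

definition t_intersecting :: "nat \<Rightarrow> nat \<Rightarrow> ('a::field ^ 'n) set set \<Rightarrow> bool" where
  "t_intersecting k t F \<longleftrightarrow> (\<forall>A\<in>F. kspace k A) \<and> (\<forall>A\<in>F. \<forall>B\<in>F. meet_atleast t A B)"

definition maximal_t_intersecting :: "nat \<Rightarrow> nat \<Rightarrow> ('a::field ^ 'n) set set \<Rightarrow> bool" where
  "maximal_t_intersecting k t F \<longleftrightarrow> t_intersecting k t F \<and>
     (\<forall>K. kspace k K \<and> K \<notin> F \<longrightarrow> \<not> t_intersecting k t (insert K F))"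

definition gauss_binom :: "real \<Rightarrow> nat \<Rightarrow> nat \<Rightarrow> real" where
  "gauss_binom q n k = (\<Prod>i<k. (q ^ (n - i) - 1) / (q ^ (k - i) - 1))"

definition theta :: "real \<Rightarrow> nat \<Rightarrow> real" where
  "theta q m = (q ^ (m + 1) - 1) / (q - 1)"

end

theory Submission
  imports Defs
begin


lemma card_span_indep:
  fixes B :: "('a::{field,finite}^'n) set"
  assumes "vec.independent B"
  shows "card (vec.span B) = CARD('a) ^ card B"
proof -
  have fin: "finite B" using assms vec.finiteI_independent by blast
  show ?thesis using fin assms
  proof (induction B rule: finite_induct)
    case empty
    then show ?case by simp
  next
    case (insert x F)
    have indF: "vec.independent F" using insert.prems vec.independent_mono by blast
    have xnot: "x \<notin> vec.span F" using insert.prems insert.hyps by (simp add: vec.independent_insert)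
    have img: "vec.span (insert x F) = (\<lambda>(c,y). c *s x + y) ` ((UNIV::'a set) \<times> vec.span F)"
    proof
      show "vec.span (insert x F) \<subseteq> (\<lambda>(c,y). c *s x + y) ` ((UNIV::'a set) \<times> vec.span F)"
      proof
        fix z assume "z \<in> vec.span (insert x F)"
        then obtain c where c: "z - c *s x \<in> vec.span F" using vec.span_breakdown_eq by blast
        then show "z \<in> (\<lambda>(c,y). c *s x + y) ` ((UNIV::'a set) \<times> vec.span F)"
          by (intro image_eqI[where x="(c, z - c *s x)"]) auto
      qed
    next
      show "(\<lambda>(c,y). c *s x + y) ` ((UNIV::'a set) \<times> vec.span F) \<subseteq> vec.span (insert x F)"
      proof clarify
        fix c y assume "y \<in> vec.span F"
        then have "y \<in> vec.span (insert x F)" using vec.span_mono[of F "insert x F"] by blast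
        moreover have "c *s x \<in> vec.span (insert x F)" by (simp add: vec.span_base vec.span_scale)
        ultimately show "c *s x + y \<in> vec.span (insert x F)" by (simp add: vec.span_add)
      qed
    qed
    have inj: "inj_on (\<lambda>(c,y). c *s x + y) ((UNIV::'a set) \<times> vec.span F)"
    proof (rule inj_onI, clarify)
      fix c y c' y'
      assume y: "y \<in> vec.span F" and y': "y' \<in> vec.span F" and eq: "c *s x + y = c' *s x + y'"
      show "c = c' \<and> y = y'"
      proof (cases "c = c'")
        case True then show ?thesis using eq by simp
      next
        case False
        have "(c - c') *s x = y' - y" using eq by (simp add: algebra_simps vector_sub_rdistrib)
        then have "inverse (c - c') *s ((c - c') *s x) = inverse (c - c') *s (y' - y)" by (rule arg_cong)
        moreover have "inverse (c - c') *s ((c - c') *s x) = x" using False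
          by (simp only: vector_smult_assoc) simp
        ultimately have "x = inverse (c - c') *s (y' - y)" by metis
        moreover have "inverse (c - c') *s (y' - y) \<in> vec.span F"
          using y y' by (intro vec.span_scale vec.span_diff)
        ultimately show ?thesis using xnot by simp
      qed
    qed
    have "card (vec.span (insert x F)) = card ((UNIV::'a set) \<times> vec.span F)"
      using img inj by (simp add: card_image)
    also have "\<dots> = CARD('a) * card (vec.span F)" by (simp add: card_cartesian_product)
    also have "\<dots> = CARD('a) ^ card (insert x F)" using insert indF by simp
    finally show ?case .
  qed
qed

lemma card_subspace:
  fixes S :: "('a::{field,finite}^'n) set"
  assumes "vec.subspace S"
  shows "card S = CARD('a) ^ vec.dim S"
proof -
  obtain B where B: "B \<subseteq> S" "vec.independent B" "S \<subseteq> vec.span B" "card B = vec.dim S"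
    using vec.basis_exists[of S] by blast
  have "vec.span B = S" using B assms vec.span_subspace by blast
  then show ?thesis using card_span_indep[OF B(2)] B(4) by simp
qed

lemma grassmann:
  fixes S T :: "('a::field^'n) set"
  assumes "vec.subspace S" "vec.subspace T"
  shows "vec.dim (vec.span (S \<union> T)) + vec.dim (S \<inter> T) = vec.dim S + vec.dim T"
proof -
  have "vec.span (S \<union> T) = {x + y |x y. x \<in> S \<and> y \<in> T}"
  proof -
    have h: "vec.span S = S" "vec.span T = T" using assms by simp_all
    have "vec.span (S \<union> T) = {x + y |x y. x \<in> vec.span S \<and> y \<in> vec.span T}" by (rule vec.span_Un)
    also have "\<dots> = {x + y |x y. x \<in> S \<and> y \<in> T}" by (simp only: h)
    finally show ?thesis .
  qed
  then show ?thesis using vec.dim_sums_Int[OF assms] by simp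
qed

lemma dim_span_insert_notin:
  fixes S :: "('a::field^'n) set"
  assumes "v \<notin> vec.span S"
  shows "vec.dim (vec.span (insert v S)) = vec.dim S + 1"
  using assms by (simp add: vec.dim_insert)

fun indep_over :: "('a::field^'n) set \<Rightarrow> ('a^'n) list \<Rightarrow> bool" where
  "indep_over D [] = True"
| "indep_over D (v # vs) = (indep_over D vs \<and> v \<notin> vec.span (D \<union> set vs))"

lemma dim_indep_over:
  assumes "indep_over D vs"
  shows "vec.dim (D \<union> set vs) = vec.dim D + length vs"
  using assms
proof (induction vs)
  case Nil
  then show ?case by simp
next
  case (Cons v vs)
  have "D \<union> set (v # vs) = insert v (D \<union> set vs)" by auto
  then show ?case using Cons by (simp add: vec.dim_insert)
qed

lemma indep_over_append:
  "indep_over D (ws @ us) \<longleftrightarrow> indep_over D us \<and> indep_over (D \<union> set us) ws"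
proof (induction ws)
  case Nil
  then show ?case by simp
next
  case (Cons w ws)
  have "D \<union> set (ws @ us) = (D \<union> set us) \<union> set ws" by auto
  then show ?case using Cons by auto
qed

lemma indep_over_mono:
  assumes "E \<subseteq> vec.span E'" "indep_over E' ws"
  shows "indep_over E ws"
  using assms(2)
proof (induction ws)
  case Nil
  then show ?case by simp
next
  case (Cons v vs)
  have "E \<union> set vs \<subseteq> vec.span (E' \<union> set vs)"
    using assms(1) vec.span_mono[of E' "E' \<union> set vs"] vec.span_superset[of "E' \<union> set vs"] by auto
  then have "vec.span (E \<union> set vs) \<subseteq> vec.span (E' \<union> set vs)"
    using vec.span_minimal vec.subspace_span by blast
  then show ?case using Cons by auto
qed

definition LI :: "('a::field^'n) set \<Rightarrow> ('a^'n) set \<Rightarrow> nat \<Rightarrow> ('a^'n) list set" where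
  "LI D S r = {vs. length vs = r \<and> set vs \<subseteq> S \<and> indep_over D vs}"

lemma finite_LI:
  fixes D S :: "('a::{field,finite}^'n) set"
  shows "finite (LI D S r)"
proof -
  have "LI D S r \<subseteq> {vs. set vs \<subseteq> UNIV \<and> length vs = r}" unfolding LI_def by auto
  moreover have "finite {vs::('a^'n) list. set vs \<subseteq> UNIV \<and> length vs = r}"
    by (rule finite_lists_length_eq) simp
  ultimately show ?thesis by (rule finite_subset)
qed

lemma LI_Suc:
  "LI D S (Suc r) = (\<Union>vs\<in>LI D S r. (\<lambda>v. v # vs) ` (S - vec.span (D \<union> set vs)))"
proof
  show "LI D S (Suc r) \<subseteq> (\<Union>vs\<in>LI D S r. (\<lambda>v. v # vs) ` (S - vec.span (D \<union> set vs)))"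
  proof
    fix xs assume "xs \<in> LI D S (Suc r)"
    then obtain v vs where xs: "xs = v # vs" and "length vs = r" "set (v#vs) \<subseteq> S" "indep_over D (v#vs)"
      unfolding LI_def by (cases xs) auto
    then show "xs \<in> (\<Union>vs\<in>LI D S r. (\<lambda>v. v # vs) ` (S - vec.span (D \<union> set vs)))"
      unfolding LI_def by auto
  qed
next
  show "(\<Union>vs\<in>LI D S r. (\<lambda>v. v # vs) ` (S - vec.span (D \<union> set vs))) \<subseteq> LI D S (Suc r)"
    unfolding LI_def by auto
qed

lemma card_LI:
  fixes D S :: "('a::{field,finite}^'n) set"
  assumes "vec.subspace D" "vec.subspace S" "D \<subseteq> S" "vec.dim D + r \<le> vec.dim S"
  shows "card (LI D S r) = (\<Prod>j<r. CARD('a) ^ vec.dim S - CARD('a) ^ (vec.dim D + j))"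
  using assms(4)
proof (induction r)
  case 0
  have "LI D S 0 = {[]}" unfolding LI_def by auto
  then show ?case by simp
next
  case (Suc r)
  let ?q = "CARD('a)"
  have IH: "card (LI D S r) = (\<Prod>j<r. ?q ^ vec.dim S - ?q ^ (vec.dim D + j))"
    using Suc by simp
  have each: "card ((\<lambda>v. v # vs) ` (S - vec.span (D \<union> set vs))) = ?q ^ vec.dim S - ?q ^ (vec.dim D + r)"
    if vs: "vs \<in> LI D S r" for vs
  proof -
    have sub: "vec.span (D \<union> set vs) \<subseteq> S"
      using vs assms(2,3) unfolding LI_def by (intro vec.span_minimal) auto
    have dimsp: "vec.dim (vec.span (D \<union> set vs)) = vec.dim D + r"
      using vs dim_indep_over[of D vs] unfolding LI_def by simp
    have "card ((\<lambda>v. v # vs) ` (S - vec.span (D \<union> set vs))) = card (S - vec.span (D \<union> set vs))"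
      by (rule card_image) (simp add: inj_on_def)
    also have "\<dots> = card S - card (vec.span (D \<union> set vs))"
      using sub by (simp add: card_Diff_subset)
    also have "\<dots> = ?q ^ vec.dim S - ?q ^ (vec.dim D + r)"
      using card_subspace[OF assms(2)] card_subspace[OF vec.subspace_span, of "D \<union> set vs"] dimsp
      by simp
    finally show ?thesis .
  qed
  have "card (LI D S (Suc r)) = (\<Sum>vs\<in>LI D S r. card ((\<lambda>v. v # vs) ` (S - vec.span (D \<union> set vs))))"
    unfolding LI_Suc
    by (rule card_UN_disjoint) (auto simp: finite_LI)
  also have "\<dots> = (\<Sum>vs\<in>LI D S r. ?q ^ vec.dim S - ?q ^ (vec.dim D + r))"
    using each by (rule sum.cong[OF refl])
  also have "\<dots> = card (LI D S r) * (?q ^ vec.dim S - ?q ^ (vec.dim D + r))" by simp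
  finally show ?case using IH by (simp add: mult.commute)
qed

lemma span_sub: "vec.subspace A \<Longrightarrow> vec.span A = A"
  by simp

lemma indep_over_lift:
  fixes A K B :: "('a::field^'n) set"
  assumes "vec.subspace A" "vec.subspace K" "B = K \<inter> A" "indep_over B ws" "set ws \<subseteq> K"
  shows "indep_over A ws"
  using assms(4,5)
proof (induction ws)
  case Nil
  then show ?case by simp
next
  case (Cons v vs)
  have IH: "indep_over A vs" using Cons by simp
  have vK: "v \<in> K" and vsK: "set vs \<subseteq> K" using Cons.prems by auto
  have vnot: "v \<notin> vec.span (B \<union> set vs)" using Cons.prems by simp
  have "v \<notin> vec.span (A \<union> set vs)"
  proof
    assume "v \<in> vec.span (A \<union> set vs)"
    then obtain x y where xy: "v = x + y" "x \<in> vec.span A" "y \<in> vec.span (set vs)"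
      using vec.span_Un[of A "set vs"] by blast
    have xA: "x \<in> A" using xy(2)[unfolded span_sub[OF assms(1)]] .
    have yK: "y \<in> K" using vec.span_minimal[OF vsK assms(2)] xy(3) by blast
    have "x = v - y" using xy(1) by simp
    then have xK: "x \<in> K" using vec.subspace_diff[OF assms(2) vK yK] by simp
    have "x \<in> B" using assms(3) xA xK by simp
    then have x1: "x \<in> vec.span (B \<union> set vs)" using vec.span_superset[of "B \<union> set vs"] by blast
    have y1: "y \<in> vec.span (B \<union> set vs)" using xy(3) vec.span_mono[of "set vs" "B \<union> set vs"] by blast
    have "v \<in> vec.span (B \<union> set vs)" using vec.span_add[OF x1 y1] xy(1) by simp
    then show False using vnot by simp
  qed
  then show ?case using IH by simp
qed

lemma count_nat:
  fixes D A :: "('a::{field,finite}^'n) set"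
  assumes sD: "vec.subspace D" and sA: "vec.subspace A" and DA: "D \<subseteq> A"
    and di: "vec.dim D \<le> i" and ia: "i \<le> vec.dim A" and im: "i \<le> m"
    and aN: "vec.dim A + (m - i) \<le> CARD('n)"
  shows "card {K. vec.subspace K \<and> vec.dim K = m \<and> D \<subseteq> K \<and> vec.dim (K \<inter> A) = i}
      * ((\<Prod>j<i - vec.dim D. CARD('a) ^ i - CARD('a) ^ (vec.dim D + j))
         * (\<Prod>j<m - i. CARD('a) ^ m - CARD('a) ^ (i + j)))
    = (\<Prod>j<i - vec.dim D. CARD('a) ^ vec.dim A - CARD('a) ^ (vec.dim D + j))
      * (\<Prod>j<m - i. CARD('a) ^ CARD('n) - CARD('a) ^ (vec.dim A + j))"
proof -
  let ?q = "CARD('a)"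
  define d where "d = vec.dim D"
  define a where "a = vec.dim A"
  define T where "T = {K. vec.subspace K \<and> vec.dim K = m \<and> D \<subseteq> K \<and> vec.dim (K \<inter> A) = i}"
  define X where "X = LI D A (i - d) \<times> LI A (UNIV::('a^'n) set) (m - i)"
  define \<Phi> where "\<Phi> = (\<lambda>p::('a^'n) list \<times> ('a^'n) list. vec.span (D \<union> set (fst p) \<union> set (snd p)))"
  have phi_in: "\<Phi> p \<in> T" and phi_dim: "vec.dim (\<Phi> p) = m" if p: "p \<in> X" for p
  proof -
    obtain us ws where p': "p = (us, ws)" by (cases p)
    have us: "length us = i - d" "set us \<subseteq> A" "indep_over D us" using p p' unfolding X_def LI_def by auto
    have ws: "length ws = m - i" "indep_over A ws" using p p' unfolding X_def LI_def by auto
    have DusA0: "D \<union> set us \<subseteq> A" using us(2) DA by auto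
    then have DusA: "D \<union> set us \<subseteq> vec.span A" using vec.span_superset by blast
    have ws': "indep_over (D \<union> set us) ws" using indep_over_mono[OF DusA ws(2)] .
    have ind: "indep_over D (ws @ us)" using indep_over_append us(3) ws' by blast
    have "vec.dim (D \<union> set (ws @ us)) = d + (i - d) + (m - i)"
      using dim_indep_over[OF ind] us(1) ws(1) d_def by simp
    moreover have "D \<union> set (ws @ us) = D \<union> set us \<union> set ws" by auto
    ultimately have dimK: "vec.dim (\<Phi> p) = m" using p' di im d_def unfolding \<Phi>_def by simp
    then show "vec.dim (\<Phi> p) = m" .
    have subK: "vec.subspace (\<Phi> p)" unfolding \<Phi>_def by simp
    have DK: "D \<subseteq> \<Phi> p" unfolding \<Phi>_def by (rule order_trans[OF _ vec.span_superset]) auto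
    have eqsp: "vec.span (\<Phi> p \<union> A) = vec.span (A \<union> set ws)"
    proof -
      have "\<Phi> p \<subseteq> vec.span (A \<union> set ws)"
      proof -
        have "D \<union> set us \<union> set ws \<subseteq> vec.span (A \<union> set ws)"
          using DusA0 vec.span_superset[of "A \<union> set ws"] by blast
        then show ?thesis unfolding \<Phi>_def p' by (simp add: vec.span_minimal)
      qed
      moreover have "A \<subseteq> vec.span (A \<union> set ws)" using vec.span_superset by blast
      moreover have "A \<union> set ws \<subseteq> vec.span (\<Phi> p \<union> A)"
      proof -
        have "set ws \<subseteq> \<Phi> p" unfolding \<Phi>_def p' by (rule order_trans[OF _ vec.span_superset]) auto
        then show ?thesis using vec.span_superset[of "\<Phi> p \<union> A"] by blast
      qed
      ultimately show ?thesis by (simp add: vec.span_eq)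
    qed
    have "vec.dim (vec.span (A \<union> set ws)) = a + (m - i)"
      using dim_indep_over[OF ws(2)] ws(1) a_def by simp
    then have "vec.dim (vec.span (\<Phi> p \<union> A)) = a + (m - i)" using eqsp by simp
    then have "vec.dim (\<Phi> p \<inter> A) = i"
      using grassmann[OF subK sA] dimK a_def im by simp
    then show "\<Phi> p \<in> T" unfolding T_def using subK dimK DK by simp
  qed
  have fiber: "{p \<in> X. \<Phi> p = K} = LI D (K \<inter> A) (i - d) \<times> LI (K \<inter> A) K (m - i)" if K: "K \<in> T" for K
  proof
    have sK: "vec.subspace K" and dK: "vec.dim K = m" and DK: "D \<subseteq> K" and dKA: "vec.dim (K \<inter> A) = i"
      using K unfolding T_def by auto
    show "{p \<in> X. \<Phi> p = K} \<subseteq> LI D (K \<inter> A) (i - d) \<times> LI (K \<inter> A) K (m - i)"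
    proof (rule subsetI)
      fix p0 assume p0: "p0 \<in> {p \<in> X. \<Phi> p = K}"
      obtain us ws where p0e: "p0 = (us, ws)" by (cases p0)
      have p: "(us, ws) \<in> X" and e: "\<Phi> (us, ws) = K" using p0 p0e by auto
      have us: "length us = i - d" "set us \<subseteq> A" "indep_over D us" using p unfolding X_def LI_def by auto
      have ws: "length ws = m - i" "indep_over A ws" using p unfolding X_def LI_def by auto
      have sub: "D \<union> set us \<union> set ws \<subseteq> K" using e vec.span_superset[of "D \<union> set us \<union> set ws"] unfolding \<Phi>_def by simp
      have "us \<in> LI D (K \<inter> A) (i - d)" using us sub unfolding LI_def by auto
      moreover have "ws \<in> LI (K \<inter> A) K (m - i)"
        using ws sub indep_over_mono[of "K \<inter> A" A ws] vec.span_superset[of A] unfolding LI_def by auto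
      ultimately show "p0 \<in> LI D (K \<inter> A) (i - d) \<times> LI (K \<inter> A) K (m - i)" using p0e by simp
    qed
    show "LI D (K \<inter> A) (i - d) \<times> LI (K \<inter> A) K (m - i) \<subseteq> {p \<in> X. \<Phi> p = K}"
    proof (rule subsetI)
      fix p0 assume p0: "p0 \<in> LI D (K \<inter> A) (i - d) \<times> LI (K \<inter> A) K (m - i)"
      obtain us ws where p0e: "p0 = (us, ws)" by (cases p0)
      have us0: "us \<in> LI D (K \<inter> A) (i - d)" and ws0: "ws \<in> LI (K \<inter> A) K (m - i)" using p0 p0e by auto
      have us: "length us = i - d" "set us \<subseteq> K \<inter> A" "indep_over D us" using us0 unfolding LI_def by auto
      have ws: "length ws = m - i" "set ws \<subseteq> K" "indep_over (K \<inter> A) ws" using ws0 unfolding LI_def by auto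
      have wsA: "indep_over A ws" using indep_over_lift[OF sA sK refl ws(3) ws(2)] .
      have pX: "(us, ws) \<in> X" unfolding X_def LI_def using us ws wsA by auto
      have "\<Phi> (us, ws) \<subseteq> K" unfolding \<Phi>_def using us(2) ws(2) DK sK by (intro vec.span_minimal) auto
      moreover have "vec.subspace (\<Phi> (us, ws))" unfolding \<Phi>_def by simp
      moreover have "vec.dim (\<Phi> (us, ws)) = m" using phi_dim[OF pX] .
      ultimately have "\<Phi> (us, ws) = K" using vec.subspace_dim_equal[of "\<Phi> (us, ws)" K] sK dK by simp
      then show "p0 \<in> {p \<in> X. \<Phi> p = K}" using pX p0e by simp
    qed
  qed
  have finX: "finite X" unfolding X_def using finite_LI by blast
  have finT: "finite T" by simp
  have "card X = (\<Sum>K\<in>T. card {p \<in> X. \<Phi> p = K})"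
  proof -
    have "(\<Sum>K\<in>T. \<Sum>p\<in>{p. p \<in> X \<and> \<Phi> p = K}. (1::nat)) = (\<Sum>p\<in>X. 1)"
      by (rule sum.group[OF finX finT]) (use phi_in in auto)
    then show ?thesis by simp
  qed
  also have "\<dots> = (\<Sum>K\<in>T. (\<Prod>j<i - d. ?q ^ i - ?q ^ (d + j)) * (\<Prod>j<m - i. ?q ^ m - ?q ^ (i + j)))"
  proof (rule sum.cong[OF refl])
    fix K assume K: "K \<in> T"
    have sK: "vec.subspace K" and dK: "vec.dim K = m" and DK: "D \<subseteq> K" and dKA: "vec.dim (K \<inter> A) = i"
      using K unfolding T_def by auto
    have sKA: "vec.subspace (K \<inter> A)" using sK sA vec.subspace_inter by blast
    have "card (LI D (K \<inter> A) (i - d)) = (\<Prod>j<i - d. ?q ^ i - ?q ^ (d + j))"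
      using card_LI[OF sD sKA, of "i - d"] DK DA dKA di d_def by simp
    moreover have "card (LI (K \<inter> A) K (m - i)) = (\<Prod>j<m - i. ?q ^ m - ?q ^ (i + j))"
      using card_LI[OF sKA sK, of "m - i"] dKA dK im by simp
    ultimately show "card {p \<in> X. \<Phi> p = K} = (\<Prod>j<i - d. ?q ^ i - ?q ^ (d + j)) * (\<Prod>j<m - i. ?q ^ m - ?q ^ (i + j))"
      using fiber[OF K] by (simp add: card_cartesian_product)
  qed
  also have "\<dots> = card T * ((\<Prod>j<i - d. ?q ^ i - ?q ^ (d + j)) * (\<Prod>j<m - i. ?q ^ m - ?q ^ (i + j)))"
    by simp
  finally have eq1: "card X = card T * ((\<Prod>j<i - d. ?q ^ i - ?q ^ (d + j)) * (\<Prod>j<m - i. ?q ^ m - ?q ^ (i + j)))" .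
  have "card (LI D A (i - d)) = (\<Prod>j<i - d. ?q ^ a - ?q ^ (d + j))"
    using card_LI[OF sD sA DA, of "i - d"] di ia d_def a_def by simp
  moreover have "card (LI A (UNIV::('a^'n) set) (m - i)) = (\<Prod>j<m - i. ?q ^ CARD('n) - ?q ^ (a + j))"
  proof -
    have dU: "vec.dim (UNIV::('a^'n) set) = CARD('n)" by (rule vec_dim_card)
    show ?thesis using card_LI[OF sA vec.subspace_UNIV, of "m - i", unfolded dU] aN a_def by simp
  qed
  ultimately have "card X = (\<Prod>j<i - d. ?q ^ a - ?q ^ (d + j)) * (\<Prod>j<m - i. ?q ^ CARD('n) - ?q ^ (a + j))"
    unfolding X_def by (simp add: card_cartesian_product)
  then show ?thesis using eq1 unfolding T_def d_def a_def by simp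
qed



lemma term_split:
  fixes Q :: nat
  assumes "Q \<ge> 2" "e \<le> s"
  shows "real (Q ^ s - Q ^ e) = real Q ^ e * (real Q ^ (s - e) - 1)"
proof -
  have le: "Q ^ e \<le> Q ^ s" using assms by (simp add: power_increasing)
  have "real (Q ^ s - Q ^ e) = real Q ^ s - real Q ^ e" using le by (simp add: of_nat_diff)
  also have "real Q ^ s = real Q ^ e * real Q ^ (s - e)"
    using assms(2) by (metis le_add_diff_inverse power_add)
  finally show ?thesis by (simp add: algebra_simps)
qed

lemma prod_ratio:
  fixes Q :: nat
  assumes Q: "Q \<ge> 2" and cc: "c' \<le> c" and cs: "c + r \<le> s"
  shows "(\<Prod>j<r. real (Q ^ s - Q ^ (c + j))) / (\<Prod>j<r. real (Q ^ (c' + r) - Q ^ (c' + j)))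
       = real Q ^ ((c - c') * r) * gauss_binom (real Q) (s - c) r"
proof -
  have Qp: "real Q > 1" using Q by simp
  have each: "real (Q ^ s - Q ^ (c + j)) / real (Q ^ (c' + r) - Q ^ (c' + j))
      = real Q ^ (c - c') * ((real Q ^ (s - c - j) - 1) / (real Q ^ (r - j) - 1))" if j: "j < r" for j
  proof -
    have a1: "real (Q ^ s - Q ^ (c + j)) = real Q ^ (c + j) * (real Q ^ (s - c - j) - 1)"
      using term_split[OF Q, of "c + j" s] j cs by (simp add: diff_diff_add)
    have a2: "real (Q ^ (c' + r) - Q ^ (c' + j)) = real Q ^ (c' + j) * (real Q ^ (r - j) - 1)"
      using term_split[OF Q, of "c' + j" "c' + r"] j by simp
    have nz: "real Q ^ (r - j) - 1 \<noteq> 0"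
    proof -
      have "real Q ^ (r - j) > 1" using Qp j by (simp add: one_less_power)
      then show ?thesis by simp
    qed
    have pw: "real Q ^ (c + j) = real Q ^ (c - c') * real Q ^ (c' + j)"
      using cc by (metis add.assoc le_add_diff_inverse2 power_add)
    have pos: "real Q ^ (c' + j) \<noteq> 0" using Qp by simp
    show ?thesis unfolding a1 a2 pw using nz pos by (simp add: field_simps)
  qed
  have "(\<Prod>j<r. real (Q ^ s - Q ^ (c + j))) / (\<Prod>j<r. real (Q ^ (c' + r) - Q ^ (c' + j)))
      = (\<Prod>j<r. real (Q ^ s - Q ^ (c + j)) / real (Q ^ (c' + r) - Q ^ (c' + j)))"
    by (simp add: prod_dividef)
  also have "\<dots> = (\<Prod>j<r. real Q ^ (c - c') * ((real Q ^ (s - c - j) - 1) / (real Q ^ (r - j) - 1)))"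
    using each by (rule prod.cong[OF refl]) simp
  also have "\<dots> = real Q ^ ((c - c') * r) * gauss_binom (real Q) (s - c) r"
    unfolding gauss_binom_def prod.distrib by (simp add: power_mult diff_diff_add)
  finally show ?thesis .
qed

lemma gauss_theta:
  assumes "q > 1"
  shows "gauss_binom q (m + 1) m = theta q m"
proof (induction m)
  case 0
  then show ?case unfolding gauss_binom_def theta_def using assms by simp
next
  case (Suc m)
  have "gauss_binom q (Suc m + 1) (Suc m)
      = (q ^ (m + 2) - 1) / (q ^ (m + 1) - 1) * gauss_binom q (m + 1) m"
  proof -
    have "gauss_binom q (Suc m + 1) (Suc m) = (\<Prod>i<Suc m. (q ^ (Suc m + 1 - i) - 1) / (q ^ (Suc m - i) - 1))"
      unfolding gauss_binom_def by simp
    also have "\<dots> = (q ^ (Suc m + 1 - 0) - 1) / (q ^ (Suc m - 0) - 1) *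
        (\<Prod>i<m. (q ^ (Suc m + 1 - Suc i) - 1) / (q ^ (Suc m - Suc i) - 1))"
      by (rule prod.lessThan_Suc_shift)
    also have "(\<Prod>i<m. (q ^ (Suc m + 1 - Suc i) - 1) / (q ^ (Suc m - Suc i) - 1)) = gauss_binom q (m + 1) m"
      unfolding gauss_binom_def by simp
    finally show ?thesis by (simp add: numeral_2_eq_2)
  qed
  also have "\<dots> = (q ^ (m + 2) - 1) / (q ^ (m + 1) - 1) * ((q ^ (m + 1) - 1) / (q - 1))"
    using Suc unfolding theta_def by simp
  also have "\<dots> = (q ^ (m + 2) - 1) / (q - 1)"
  proof -
    have "q ^ (m + 1) > 1" using assms one_less_power[of q "m + 1"] by linarith
    then show ?thesis by simp
  qed
  finally show ?case unfolding theta_def by simp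
qed



lemma card_field_ge2: "CARD('a::{field,finite}) \<ge> 2"
proof -
  have "card {0::'a, 1} = 2" by simp
  moreover have "card {0::'a, 1} \<le> CARD('a)" by (rule card_mono) auto
  ultimately show ?thesis by simp
qed

lemma count_real:
  fixes D A :: "('a::{field,finite}^'n) set"
  assumes sD: "vec.subspace D" and sA: "vec.subspace A" and DA: "D \<subseteq> A"
    and di: "vec.dim D \<le> i" and ia: "i \<le> vec.dim A" and im: "i \<le> m"
    and aN: "vec.dim A + (m - i) \<le> CARD('n)"
  shows "real (card {K. vec.subspace K \<and> vec.dim K = m \<and> D \<subseteq> K \<and> vec.dim (K \<inter> A) = i})
    = gauss_binom (real CARD('a)) (vec.dim A - vec.dim D) (i - vec.dim D)
      * real CARD('a) ^ ((vec.dim A - i) * (m - i))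
      * gauss_binom (real CARD('a)) (CARD('n) - vec.dim A) (m - i)"
proof -
  let ?Q = "CARD('a)"
  define d where "d = vec.dim D"
  define a where "a = vec.dim A"
  define C where "C = card {K. vec.subspace K \<and> vec.dim K = m \<and> D \<subseteq> K \<and> vec.dim (K \<inter> A) = i}"
  define P1 where "P1 = (\<Prod>j<i - d. ?Q ^ i - ?Q ^ (d + j))"
  define P2 where "P2 = (\<Prod>j<m - i. ?Q ^ m - ?Q ^ (i + j))"
  define X1 where "X1 = (\<Prod>j<i - d. ?Q ^ a - ?Q ^ (d + j))"
  define X2 where "X2 = (\<Prod>j<m - i. ?Q ^ CARD('n) - ?Q ^ (a + j))"
  have Q: "?Q \<ge> 2" by (rule card_field_ge2)
  have eq: "C * (P1 * P2) = X1 * X2"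
    using count_nat[OF sD sA DA di ia im aN] unfolding C_def P1_def P2_def X1_def X2_def d_def a_def .
  have i_eq: "i = d + (i - d)" using di d_def by simp
  have m_eq: "m = i + (m - i)" using im by simp
  have r1: "real X1 / real P1 = real ?Q ^ ((d - d) * (i - d)) * gauss_binom (real ?Q) (a - d) (i - d)"
  proof -
    have "real P1 = (\<Prod>j<i - d. real (?Q ^ (d + (i - d)) - ?Q ^ (d + j)))"
      unfolding P1_def of_nat_prod using i_eq by simp
    moreover have "real X1 = (\<Prod>j<i - d. real (?Q ^ a - ?Q ^ (d + j)))"
      unfolding X1_def of_nat_prod by simp
    ultimately show ?thesis using prod_ratio[OF Q, of d d "i - d" a] ia i_eq a_def by simp
  qed
  have r2: "real X2 / real P2 = real ?Q ^ ((a - i) * (m - i)) * gauss_binom (real ?Q) (CARD('n) - a) (m - i)"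
  proof -
    have "real P2 = (\<Prod>j<m - i. real (?Q ^ (i + (m - i)) - ?Q ^ (i + j)))"
      unfolding P2_def of_nat_prod using m_eq by simp
    moreover have "real X2 = (\<Prod>j<m - i. real (?Q ^ CARD('n) - ?Q ^ (a + j)))"
      unfolding X2_def of_nat_prod by simp
    ultimately show ?thesis using prod_ratio[OF Q, of i a "m - i" "CARD('n)"] ia aN a_def by simp
  qed
  have P1nz: "P1 \<noteq> 0"
  proof -
    have "\<forall>j<i - d. ?Q ^ (d + j) < ?Q ^ i" using Q by (auto intro: power_strict_increasing)
    then show ?thesis unfolding P1_def by (auto simp: prod_zero_iff not_le)
  qed
  have P2nz: "P2 \<noteq> 0"
  proof -
    have "\<forall>j<m - i. ?Q ^ (i + j) < ?Q ^ m" using Q by (auto intro: power_strict_increasing)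
    then show ?thesis unfolding P2_def by (auto simp: prod_zero_iff not_le)
  qed
  have "real C * (real P1 * real P2) = real X1 * real X2"
    using arg_cong[OF eq, of real] by simp
  then have "real C = (real X1 / real P1) * (real X2 / real P2)"
    using P1nz P2nz by (simp add: field_simps)
  also have "\<dots> = gauss_binom (real ?Q) (a - d) (i - d) * real ?Q ^ ((a - i) * (m - i))
      * gauss_binom (real ?Q) (CARD('n) - a) (m - i)"
    unfolding r1 r2 by simp
  finally show ?thesis unfolding C_def a_def d_def .
qed



lemma hyperplane_avoid:
  fixes A :: "('a::field^'n) set"
  assumes sA: "vec.subspace A" and vA: "v \<in> A" and v0: "v \<noteq> 0"
  shows "\<exists>H. vec.subspace H \<and> H \<subseteq> A \<and> vec.dim H + 1 = vec.dim A \<and> v \<notin> H"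
proof -
  have "vec.independent {v}" using v0 by simp
  then obtain B where B: "{v} \<subseteq> B" "B \<subseteq> A" "vec.independent B" "A \<subseteq> vec.span B"
    using vec.maximal_independent_subset_extend[of "{v}" A] vA by blast
  have finB: "finite B" using B(3) vec.finiteI_independent by blast
  have vB: "v \<in> B" using B(1) by simp
  have ins: "B = insert v (B - {v})" using vB by blast
  have indB': "vec.independent (B - {v})" using B(3) vec.independent_mono by blast
  have vnot: "v \<notin> vec.span (B - {v})"
  proof -
    show ?thesis by (metis B(3) ins vec.independent_insert Diff_iff singletonI)
  qed
  have cardB: "card B = vec.dim A" using vec.basis_card_eq_dim[OF B(2) B(4) B(3)] .
  have "vec.dim (vec.span (B - {v})) = card (B - {v})"
    using vec.dim_eq_card_independent[OF indB'] by simp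
  also have "\<dots> = card B - 1" using vB finB by simp
  finally have dH: "vec.dim (vec.span (B - {v})) + 1 = vec.dim A"
    using cardB vB finB by (metis One_nat_def Suc_pred card_gt_0_iff empty_iff add.commute plus_1_eq_Suc)
  have "vec.span (B - {v}) \<subseteq> A" using B(2) sA by (intro vec.span_minimal) auto
  then show ?thesis using dH vnot by (intro exI[of _ "vec.span (B - {v})"]) simp
qed

lemma greedy_ext:
  fixes C K :: "('a::field^'n) set"
  assumes "vec.subspace C" "vec.subspace K" "vec.dim C \<le> m" "m \<le> CARD('n)"
  shows "\<exists>K'. vec.subspace K' \<and> C \<subseteq> K' \<and> vec.dim K' = m \<and>
           vec.dim (K \<inter> K') \<le> max (vec.dim (K \<inter> C)) (vec.dim K + m - CARD('n))"
  using assms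
proof (induction "m - vec.dim C" arbitrary: C)
  case 0
  then show ?case by (intro exI[of _ C]) auto
next
  case (Suc r)
  have sC: "vec.subspace C" and sK: "vec.subspace K" using Suc.prems by auto
  have Cm: "vec.dim C < m" using Suc.hyps(2) by simp
  have dU: "vec.dim (UNIV::('a^'n) set) = CARD('n)" by (rule vec_dim_card)
  have gKC: "vec.dim (K \<union> C) + vec.dim (K \<inter> C) = vec.dim K + vec.dim C"
    using grassmann[OF sK sC] by simp
  obtain v where vC: "v \<notin> C" and vcase: "vec.span (K \<union> C) \<noteq> UNIV \<longrightarrow> v \<notin> vec.span (K \<union> C)"
  proof (cases "vec.span (K \<union> C) = UNIV")
    case True
    have "C \<noteq> UNIV" using Cm Suc.prems(4) dU by auto
    then obtain v where "v \<notin> C" by blast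
    then show ?thesis using that True by blast
  next
    case False
    then obtain v where v: "v \<notin> vec.span (K \<union> C)" by blast
    then have "v \<notin> C" using vec.span_superset[of "K \<union> C"] by blast
    then show ?thesis using that v by blast
  qed
  define C' where "C' = vec.span (insert v C)"
  have sC': "vec.subspace C'" unfolding C'_def by simp
  have CC': "C \<subseteq> C'" unfolding C'_def using vec.span_superset[of "insert v C"] by blast
  have vC': "v \<in> C'" unfolding C'_def using vec.span_superset[of "insert v C"] by blast
  have vspC: "v \<notin> vec.span C" unfolding span_sub[OF sC] using vC .
  have dC': "vec.dim C' = vec.dim C + 1" unfolding C'_def using vspC by (simp add: vec.dim_insert)
  have gKC': "vec.dim (K \<union> C') + vec.dim (K \<inter> C') = vec.dim K + vec.dim C'"
    using grassmann[OF sK sC'] by simp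
  have bound: "vec.dim (K \<inter> C') \<le> max (vec.dim (K \<inter> C)) (vec.dim K + m - CARD('n))"
  proof (cases "vec.span (K \<union> C) = UNIV")
    case True
    have "vec.dim (K \<union> C) = CARD('n)" using True dU by (metis vec.dim_span)
    moreover have "vec.dim (K \<union> C) \<le> vec.dim (K \<union> C')" using CC' by (intro vec.dim_subset) auto
    ultimately show ?thesis using gKC' dC' Cm by linarith
  next
    case False
    then have v1: "v \<notin> vec.span (K \<union> C)" using vcase by simp
    have "vec.dim (insert v (K \<union> C)) = vec.dim (K \<union> C) + 1" using v1 by (simp add: vec.dim_insert)
    moreover have "vec.dim (insert v (K \<union> C)) \<le> vec.dim (K \<union> C')" using CC' vC' by (intro vec.dim_subset) auto
    ultimately show ?thesis using gKC' dC' gKC by linarith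
  qed
  have "r = m - vec.dim C'" using Suc.hyps(2) dC' by simp
  then obtain K' where K': "vec.subspace K'" "C' \<subseteq> K'" "vec.dim K' = m"
    "vec.dim (K \<inter> K') \<le> max (vec.dim (K \<inter> C')) (vec.dim K + m - CARD('n))"
    using Suc.hyps(1)[of C'] sC' sK dC' Cm Suc.prems(4) by auto
  show ?case using K' bound CC' by (intro exI[of _ K']) auto
qed



lemma dim_zero_set: "vec.dim {0::'a::field^'n} = 0"
  by (simp add: vec.dim_insert)

lemma meet_sym: "meet_atleast t A B \<longleftrightarrow> meet_atleast t B A"
  unfolding meet_atleast_def by (simp add: Int_commute)

lemma dim_lt_proper:
  fixes A B :: "('a::field^'n) set"
  assumes "vec.subspace A" "vec.subspace B" "B \<subseteq> A" "v \<in> A" "v \<notin> B"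
  shows "vec.dim B < vec.dim A"
proof -
  have "vec.span B \<subset> vec.span A" unfolding span_sub[OF assms(1)] span_sub[OF assms(2)] using assms(3-5) by blast
  then show ?thesis by (rule vec.dim_psubset)
qed

lemma maximal_part:
  fixes \<delta> \<pi> :: "('a::{field,finite} ^ 'n) set"
  assumes tk: "t < k" and Nbig: "2 * k + 2 - t \<le> CARD('n)"
    and kd: "kspace t \<delta>" and kp: "kspace k \<pi>"
    and dpd: "vec.dim (\<pi> \<inter> \<delta>) = t"
  shows "maximal_t_intersecting k t
     ({K. kspace k K \<and> K \<subseteq> vec.span (\<pi> \<union> \<delta>)} \<union>
      {K. kspace k K \<and> \<delta> \<subseteq> K \<and> meet_atleast (t + 1) K (vec.span (\<pi> \<union> \<delta>))})"
proof -
  define Sg where "Sg = vec.span (\<pi> \<union> \<delta>)"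
  define S1 where "S1 = {K. kspace k K \<and> K \<subseteq> Sg}"
  define S2 where "S2 = {K. kspace k K \<and> \<delta> \<subseteq> K \<and> meet_atleast (t + 1) K Sg}"
  have sd: "vec.subspace \<delta>" and dd: "vec.dim \<delta> = t + 1" using kd unfolding kspace_def by auto
  have sp: "vec.subspace \<pi>" and dp: "vec.dim \<pi> = k + 1" using kp unfolding kspace_def by auto
  have sSg: "vec.subspace Sg" unfolding Sg_def by simp
  have dSg: "vec.dim Sg = k + 2" using grassmann[OF sp sd] dpd dp dd unfolding Sg_def by simp
  have dSg_le: "vec.dim Sg \<le> CARD('n)" by (rule dim_subset_UNIV_cart_gen)
  have dSg': "vec.dim Sg = vec.dim (\<pi> \<union> \<delta>)" unfolding Sg_def by simp
  have dSgsub: "\<delta> \<subseteq> Sg" unfolding Sg_def using vec.span_superset[of "\<pi> \<union> \<delta>"] by blast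
  have lb: "vec.dim A + vec.dim B \<le> vec.dim (A \<inter> B) + s"
    if "vec.subspace A" "vec.subspace B" "A \<union> B \<subseteq> Sg" "vec.dim Sg \<le> s" for A B s
  proof -
    have "vec.dim (A \<union> B) \<le> vec.dim Sg" using that(3) by (rule vec.dim_subset)
    then show ?thesis using grassmann[OF that(1,2)] that(4) by simp
  qed
  have S1S2: "meet_atleast t A B" if A: "A \<in> S1" and B: "B \<in> S2" for A B
  proof -
    have sA: "vec.subspace A" and dA: "vec.dim A = k + 1" and ASg: "A \<subseteq> Sg"
      using A unfolding S1_def kspace_def by auto
    have sB: "vec.subspace B" and dB: "vec.dim (B \<inter> Sg) \<ge> t + 2"
      using B unfolding S2_def kspace_def meet_atleast_def by auto
    have sBS: "vec.subspace (B \<inter> Sg)" using sB sSg vec.subspace_inter by blast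
    have "vec.dim A + vec.dim (B \<inter> Sg) \<le> vec.dim (A \<inter> (B \<inter> Sg)) + (k + 2)"
    proof -
      have "A \<union> (B \<inter> Sg) \<subseteq> Sg" using ASg by auto
      then show ?thesis using lb[OF sA sBS, of "k + 2"] dSg by simp
    qed
    then have "t + 1 \<le> vec.dim (A \<inter> (B \<inter> Sg))" using dA dB by linarith
    moreover have "vec.dim (A \<inter> (B \<inter> Sg)) \<le> vec.dim (A \<inter> B)" by (rule vec.dim_subset) auto
    ultimately show ?thesis unfolding meet_atleast_def by linarith
  qed
  have tint: "t_intersecting k t (S1 \<union> S2)"
    unfolding t_intersecting_def
  proof (intro conjI ballI)
    fix A assume "A \<in> S1 \<union> S2" then show "kspace k A" unfolding S1_def S2_def by auto
  next
    fix A B assume A: "A \<in> S1 \<union> S2" and B: "B \<in> S1 \<union> S2"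
    show "meet_atleast t A B"
    proof (cases "A \<in> S1")
      case A1: True
      show ?thesis
      proof (cases "B \<in> S1")
        case True
        have sA: "vec.subspace A" "vec.dim A = k + 1" "A \<subseteq> Sg" using A1 unfolding S1_def kspace_def by auto
        have sB: "vec.subspace B" "vec.dim B = k + 1" "B \<subseteq> Sg" using True unfolding S1_def kspace_def by auto
        have "A \<union> B \<subseteq> Sg" using sA(3) sB(3) by auto
        then have "vec.dim A + vec.dim B \<le> vec.dim (A \<inter> B) + (k + 2)" using lb[OF sA(1) sB(1), of "k + 2"] dSg by simp
        then show ?thesis unfolding meet_atleast_def using sA(2) sB(2) tk by linarith
      next
        case False
        then have "B \<in> S2" using B by simp
        then show ?thesis using S1S2 A1 by blast
      qed
    next
      case A2: False
      then have A2: "A \<in> S2" using A by simp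
      show ?thesis
      proof (cases "B \<in> S1")
        case True
        then show ?thesis using S1S2 A2 meet_sym by blast
      next
        case False
        then have B2: "B \<in> S2" using B by simp
        have "\<delta> \<subseteq> A \<inter> B" using A2 B2 unfolding S2_def by auto
        then have "vec.dim \<delta> \<le> vec.dim (A \<inter> B)" by (rule vec.dim_subset)
        then show ?thesis unfolding meet_atleast_def using dd by simp
      qed
    qed
  qed
  have maxi: "\<not> t_intersecting k t (insert K (S1 \<union> S2))" if kK: "kspace k K" and KS: "K \<notin> S1 \<union> S2" for K
  proof
    assume ti: "t_intersecting k t (insert K (S1 \<union> S2))"
    have meetK: "t + 1 \<le> vec.dim (K \<inter> B)" if "B \<in> S1 \<union> S2" for B
      using ti that unfolding t_intersecting_def meet_atleast_def by auto
    have sK: "vec.subspace K" and dK: "vec.dim K = k + 1" using kK unfolding kspace_def by auto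
    have KnotSg: "\<not> K \<subseteq> Sg" using KS kK unfolding S1_def by auto
    show False
    proof (cases "\<delta> \<subseteq> K")
      case True
      have "\<not> meet_atleast (t + 1) K Sg" using KS kK True unfolding S2_def by auto
      then have lt: "vec.dim (K \<inter> Sg) \<le> t + 1" unfolding meet_atleast_def by simp
      have sKS: "vec.subspace (K \<inter> Sg)" using sK sSg vec.subspace_inter by blast
      have eqd: "\<delta> = K \<inter> Sg"
        using vec.subspace_dim_equal[OF sd sKS] True dSgsub lt dd by auto
      obtain v where v: "v \<in> \<delta>" "v \<noteq> 0"
      proof -
        have "\<not> \<delta> \<subseteq> {0}"
        proof
          assume "\<delta> \<subseteq> {0}"
          then have "vec.dim \<delta> \<le> vec.dim {0::'a^'n}" by (rule vec.dim_subset)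
          then show False using dd dim_zero_set by simp
        qed
        then show ?thesis using that by blast
      qed
      obtain H where H: "vec.subspace H" "H \<subseteq> Sg" "vec.dim H + 1 = vec.dim Sg" "v \<notin> H"
        using hyperplane_avoid[OF sSg, of v] v dSgsub by blast
      have "H \<in> S1" unfolding S1_def kspace_def using H dSg by simp
      then have m: "t + 1 \<le> vec.dim (K \<inter> H)" using meetK by simp
      have "K \<inter> H = \<delta> \<inter> H" using eqd H(2) by blast
      moreover have "vec.dim (\<delta> \<inter> H) < vec.dim \<delta>"
        using dim_lt_proper[OF sd vec.subspace_inter[OF sd H(1)], of v] v H(4) by blast
      ultimately show False using m dd by simp
    next
      case False
      then obtain u where u: "u \<in> \<delta>" "u \<notin> K" by blast
      have sKd: "vec.subspace (K \<inter> \<delta>)" using sK sd vec.subspace_inter by blast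
      have dKd: "vec.dim (K \<inter> \<delta>) \<le> t"
        using dim_lt_proper[OF sd sKd, of u] u dd by simp
      have gKd: "vec.dim (K \<union> \<delta>) + vec.dim (K \<inter> \<delta>) = k + 1 + (t + 1)"
        using grassmann[OF sK sd] dK dd by simp
      obtain T where T: "vec.subspace T" "\<delta> \<subseteq> T" "T \<subseteq> Sg" "vec.dim T = t + 2" "vec.dim (K \<inter> T) \<le> t"
      proof (cases "Sg \<subseteq> vec.span (K \<union> \<delta>)")
        case False
        then obtain w where w: "w \<in> Sg" "w \<notin> vec.span (K \<union> \<delta>)" by blast
        have wd: "w \<notin> vec.span \<delta>" using w(2) vec.span_mono[of \<delta> "K \<union> \<delta>"] by blast
        define T where "T = vec.span (insert w \<delta>)"
        have sT: "vec.subspace T" unfolding T_def by simp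
        have dT: "vec.dim T = t + 2" unfolding T_def using wd dd by (simp add: vec.dim_insert)
        have dT2: "\<delta> \<subseteq> T" "w \<in> T" unfolding T_def using vec.span_superset[of "insert w \<delta>"] by auto
        have TSg: "T \<subseteq> Sg" unfolding T_def using w(1) dSgsub sSg by (intro vec.span_minimal) auto
        have gKT: "vec.dim (K \<union> T) + vec.dim (K \<inter> T) = k + 1 + (t + 2)"
          using grassmann[OF sK sT] dK dT by simp
        have "vec.dim (insert w (K \<union> \<delta>)) = vec.dim (K \<union> \<delta>) + 1" using w(2) by (simp add: vec.dim_insert)
        moreover have "vec.dim (insert w (K \<union> \<delta>)) \<le> vec.dim (K \<union> T)" using dT2 by (intro vec.dim_subset) auto
        ultimately have "vec.dim (K \<inter> T) \<le> t" using gKT gKd dKd by linarith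
        then show ?thesis using that sT dT2 TSg dT by blast
      next
        case True
        have sKd2: "vec.subspace (vec.span (K \<union> \<delta>))" by simp
        have dKd2: "vec.dim (K \<inter> \<delta>) < t"
        proof (rule ccontr)
          assume "\<not> vec.dim (K \<inter> \<delta>) < t"
          then have "vec.dim (K \<inter> \<delta>) = t" using dKd by linarith
          then have "vec.dim (vec.span (K \<union> \<delta>)) = k + 2" using gKd by simp
          then have "Sg = vec.span (K \<union> \<delta>)" using vec.subspace_dim_equal[OF sSg sKd2 True] dSg by simp
          then have "K \<subseteq> Sg" using vec.span_superset[of "K \<union> \<delta>"] by blast
          then show False using KnotSg by simp
        qed
        obtain w where w: "w \<in> Sg" "w \<notin> \<delta>"
        proof -
          have "\<not> Sg \<subseteq> \<delta>"
          proof
            assume "Sg \<subseteq> \<delta>"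
            then have "vec.dim Sg \<le> vec.dim \<delta>" by (rule vec.dim_subset)
            then show False using dSg dd tk by simp
          qed
          then show ?thesis using that by blast
        qed
        have wd: "w \<notin> vec.span \<delta>" unfolding span_sub[OF sd] using w(2) .
        define T where "T = vec.span (insert w \<delta>)"
        have sT: "vec.subspace T" unfolding T_def by simp
        have dT: "vec.dim T = t + 2" unfolding T_def using wd dd by (simp add: vec.dim_insert)
        have dT2: "\<delta> \<subseteq> T" unfolding T_def using vec.span_superset[of "insert w \<delta>"] by auto
        have TSg: "T \<subseteq> Sg" unfolding T_def using w(1) dSgsub sSg by (intro vec.span_minimal) auto
        have gKT: "vec.dim (K \<union> T) + vec.dim (K \<inter> T) = k + 1 + (t + 2)"
          using grassmann[OF sK sT] dK dT by simp
        have "vec.dim (K \<union> \<delta>) \<le> vec.dim (K \<union> T)" using dT2 by (intro vec.dim_subset) auto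
        then have "vec.dim (K \<inter> T) \<le> t" using gKT gKd dKd2 tk dKd by linarith
        then show ?thesis using that sT dT2 TSg dT by blast
      qed
      have tk1: "vec.dim T \<le> k + 1" using T(4) tk by simp
      have kN: "k + 1 \<le> CARD('n)" using Nbig tk by linarith
      obtain K' where K': "vec.subspace K'" "T \<subseteq> K'" "vec.dim K' = k + 1"
        "vec.dim (K \<inter> K') \<le> max (vec.dim (K \<inter> T)) (vec.dim K + (k + 1) - CARD('n))"
        using greedy_ext[OF T(1) sK tk1 kN] by blast
      have small: "vec.dim (K \<inter> K') \<le> t" using K'(4) T(5) dK Nbig by simp
      have "T \<subseteq> K' \<inter> Sg" using K'(2) T(3) by blast
      then have "vec.dim T \<le> vec.dim (K' \<inter> Sg)" by (rule vec.dim_subset)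
      then have "K' \<in> S2" unfolding S2_def kspace_def meet_atleast_def using K' T(2,4) by auto
      then have "t + 1 \<le> vec.dim (K \<inter> K')" using meetK by simp
      then show False using small by simp
    qed
  qed
  show ?thesis
    unfolding maximal_t_intersecting_def S1_def[symmetric] S2_def[symmetric] Sg_def[symmetric]
    using tint maxi by blast
qed



theorem mainTheorem4:
  fixes \<delta> \<pi> :: "('a::{field,finite} ^ 'n) set"
    and t k n :: nat
  defines "n \<equiv> CARD('n) - 1"
    and "q \<equiv> real CARD('a)"
  assumes "t < k" and "n > 2 * k - t"
    and "kspace t \<delta>" and "kspace k \<pi>"
    and "vec.dim (\<pi> \<inter> \<delta>) = t"
  defines "S1 \<equiv> {K. kspace k K \<and> K \<subseteq> vec.span (\<pi> \<union> \<delta>)}"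
    and "S2 \<equiv> {K. kspace k K \<and> \<delta> \<subseteq> K \<and> meet_atleast (t + 1) K (vec.span (\<pi> \<union> \<delta>))}"
  shows "maximal_t_intersecting k t (S1 \<union> S2)
    \<and> real (card (S1 \<union> S2)) = theta q (k + 1) - theta q (k - t) + gauss_binom q (n - t) (k - t)
          - q ^ ((k - t + 1) * (k - t)) * gauss_binom q (n - k - 1) (k - t)
    \<and> real (card (S1 \<union> S2)) = theta q (k + 1) +
          (\<Sum>j<k - t - 1. gauss_binom q (k - t + 1) (j + 1) * q ^ ((k - t - j) * (k - t - j - 1))
                            * gauss_binom q (n - k - 1) (k - t - j - 1))"
proof -
  note tk = assms(3) and nbig = assms(4) and kd = assms(5) and kp = assms(6) and dpd = assms(7)
  define N where "N = CARD('n)"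
  have Npos: "N \<ge> 1" unfolding N_def by (simp add: Suc_leI)
  have Nn: "N = n + 1" unfolding n_def N_def using Npos N_def by simp
  have Nbig: "2 * k + 2 - t \<le> CARD('n)" using nbig Nn tk unfolding N_def by linarith
  have maxi: "maximal_t_intersecting k t (S1 \<union> S2)"
    unfolding S1_def S2_def using maximal_part[OF tk Nbig kd kp dpd] .
  define Sg where "Sg = vec.span (\<pi> \<union> \<delta>)"
  have sd: "vec.subspace \<delta>" and dd: "vec.dim \<delta> = t + 1" using kd unfolding kspace_def by auto
  have sp: "vec.subspace \<pi>" and dp: "vec.dim \<pi> = k + 1" using kp unfolding kspace_def by auto
  have sSg: "vec.subspace Sg" unfolding Sg_def by simp
  have dSg: "vec.dim Sg = k + 2" using grassmann[OF sp sd] dpd dp dd unfolding Sg_def by simp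
  have dSgsub: "\<delta> \<subseteq> Sg" unfolding Sg_def using vec.span_superset[of "\<pi> \<union> \<delta>"] by blast
  have Q: "CARD('a) \<ge> 2" by (rule card_field_ge2)
  have q1: "q > 1" unfolding q_def using Q by simp
  have ksub: "K \<subseteq> Sg \<longleftrightarrow> vec.dim (K \<inter> Sg) = k + 1" if "vec.subspace K" "vec.dim K = k + 1" for K
  proof
    assume "K \<subseteq> Sg" then show "vec.dim (K \<inter> Sg) = k + 1" using that by (simp add: Int_absorb2)
  next
    assume a: "vec.dim (K \<inter> Sg) = k + 1"
    have "vec.subspace (K \<inter> Sg)" using that(1) sSg vec.subspace_inter by blast
    then have "K \<inter> Sg = K" using vec.subspace_dim_equal[of "K \<inter> Sg" K] that a by auto
    then show "K \<subseteq> Sg" by blast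
  qed
  define T where "T = (\<lambda>i. {K. vec.subspace K \<and> vec.dim K = k + 1 \<and> \<delta> \<subseteq> K \<and> vec.dim (K \<inter> Sg) = i})"
  define f where "f = (\<lambda>i. gauss_binom q (k + 1 - t) (i - (t + 1)) * q ^ ((k + 2 - i) * (k + 1 - i))
      * gauss_binom q (N - (k + 2)) (k + 1 - i))"
  have cardT: "real (card (T i)) = f i" if "t + 1 \<le> i" "i \<le> k + 1" for i
  proof -
    have "vec.dim Sg + (k + 1 - i) \<le> CARD('n)" using dSg that Nbig by linarith
    then have "real (card (T i)) = gauss_binom q (vec.dim Sg - vec.dim \<delta>) (i - vec.dim \<delta>) * q ^ ((vec.dim Sg - i) * (k + 1 - i))
      * gauss_binom q (CARD('n) - vec.dim Sg) (k + 1 - i)"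
      unfolding T_def q_def using count_real[OF sd sSg dSgsub, of i "k + 1"] that dd dSg by simp
    then show ?thesis unfolding f_def N_def using dd dSg by simp
  qed
  have finT: "finite (T i)" for i by simp
  have disjT: "T i \<inter> T j = {}" if "i \<noteq> j" for i j using that unfolding T_def by auto
  have cardUT: "card (\<Union>i\<in>I. T i) = (\<Sum>i\<in>I. card (T i))" if "finite I" for I
    using that by (intro card_UN_disjoint) (auto simp: finT disjT)
  have S1eq: "S1 = {K. vec.subspace K \<and> vec.dim K = k + 1 \<and> {0} \<subseteq> K \<and> vec.dim (K \<inter> Sg) = k + 1}"
    unfolding S1_def Sg_def[symmetric] kspace_def using ksub vec.subspace_0 by auto
  have cS1: "real (card S1) = theta q (k + 1)"
  proof -
    have "vec.dim Sg + (k + 1 - (k + 1)) \<le> CARD('n)" using dSg Nbig tk by linarith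
    then have "real (card S1) = gauss_binom q (vec.dim Sg - vec.dim {0::'a^'n}) (k + 1 - vec.dim {0::'a^'n})
      * q ^ ((vec.dim Sg - (k + 1)) * (k + 1 - (k + 1))) * gauss_binom q (CARD('n) - vec.dim Sg) (k + 1 - (k + 1))"
      unfolding S1eq q_def using count_real[OF vec.subspace_single_0 sSg, of "k + 1" "k + 1"] dSg vec.subspace_0[OF sSg] by simp
    also have "\<dots> = gauss_binom q (k + 1 + 1) (k + 1)"
      using dSg dim_zero_set by (simp add: gauss_binom_def)
    also have "\<dots> = theta q (k + 1)" using gauss_theta[OF q1] by blast
    finally show ?thesis .
  qed
  have S21: "S2 - S1 = (\<Union>i\<in>{t + 2..k}. T i)"
  proof
    show "S2 - S1 \<subseteq> (\<Union>i\<in>{t + 2..k}. T i)"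
    proof
      fix K assume K: "K \<in> S2 - S1"
      have sK: "vec.subspace K" "vec.dim K = k + 1" "\<delta> \<subseteq> K" "vec.dim (K \<inter> Sg) \<ge> t + 2"
        using K unfolding S2_def Sg_def kspace_def meet_atleast_def by auto
      have "\<not> K \<subseteq> Sg" using K sK unfolding S1_def Sg_def kspace_def by auto
      then have "vec.dim (K \<inter> Sg) \<noteq> k + 1" using ksub sK by blast
      moreover have "vec.dim (K \<inter> Sg) \<le> k + 1" using sK(2) vec.dim_subset[of "K \<inter> Sg" K] by auto
      ultimately show "K \<in> (\<Union>i\<in>{t + 2..k}. T i)" unfolding T_def using sK by auto
    qed
  next
    show "(\<Union>i\<in>{t + 2..k}. T i) \<subseteq> S2 - S1"
    proof
      fix K assume "K \<in> (\<Union>i\<in>{t + 2..k}. T i)"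
      then obtain i where i: "t + 2 \<le> i" "i \<le> k" "K \<in> T i" by auto
      have sK: "vec.subspace K" "vec.dim K = k + 1" "\<delta> \<subseteq> K" "vec.dim (K \<inter> Sg) = i"
        using i unfolding T_def by auto
      have "\<not> K \<subseteq> Sg" using ksub[OF sK(1,2)] sK(4) i(2) by simp
      then show "K \<in> S2 - S1" unfolding S1_def S2_def Sg_def[symmetric] kspace_def meet_atleast_def
        using sK i by auto
    qed
  qed
  have cS21: "real (card (S2 - S1)) = (\<Sum>i\<in>{t + 2..k}. f i)"
    unfolding S21 using cardUT[of "{t + 2..k}"] cardT by simp
  have cU: "real (card (S1 \<union> S2)) = theta q (k + 1) + (\<Sum>i\<in>{t + 2..k}. f i)"
  proof -
    have "S1 \<union> S2 = S1 \<union> (S2 - S1)" by blast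
    moreover have "card (S1 \<union> (S2 - S1)) = card S1 + card (S2 - S1)"
      by (rule card_Un_disjoint) auto
    ultimately have "card (S1 \<union> S2) = card S1 + card (S2 - S1)" by simp
    then show ?thesis using cS1 cS21 by simp
  qed
  have reidx: "(\<Sum>i\<in>{t + 2..k}. f i) = (\<Sum>j<k - t - 1. gauss_binom q (k - t + 1) (j + 1) * q ^ ((k - t - j) * (k - t - j - 1))
                            * gauss_binom q (n - k - 1) (k - t - j - 1))"
  proof -
    have img: "{t + 2..k} = (\<lambda>j. t + 2 + j) ` {..<k - t - 1}"
    proof
      show "{t + 2..k} \<subseteq> (\<lambda>j. t + 2 + j) ` {..<k - t - 1}"
      proof
        fix x assume "x \<in> {t + 2..k}"
        then show "x \<in> (\<lambda>j. t + 2 + j) ` {..<k - t - 1}"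
          by (intro image_eqI[of _ _ "x - (t + 2)"]) auto
      qed
    qed auto
    have "(\<Sum>i\<in>{t + 2..k}. f i) = (\<Sum>j<k - t - 1. f (t + 2 + j))"
      unfolding img by (subst sum.reindex) (auto simp: inj_on_def)
    also have "\<dots> = (\<Sum>j<k - t - 1. gauss_binom q (k - t + 1) (j + 1) * q ^ ((k - t - j) * (k - t - j - 1))
                            * gauss_binom q (n - k - 1) (k - t - j - 1))"
    proof (rule sum.cong[OF refl])
      fix j assume j: "j \<in> {..<k - t - 1}"
      have e1: "k + 1 - t = k - t + 1" using tk by simp
      have e2: "t + 2 + j - (t + 1) = j + 1" by simp
      have e3: "k + 2 - (t + 2 + j) = k - t - j" by simp
      have e4: "k + 1 - (t + 2 + j) = k - t - j - 1" by simp
      have e5: "N - (k + 2) = n - k - 1" using Nn by simp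
      show "f (t + 2 + j) = gauss_binom q (k - t + 1) (j + 1) * q ^ ((k - t - j) * (k - t - j - 1))
                            * gauss_binom q (n - k - 1) (k - t - j - 1)"
        unfolding f_def e1 e2 e3 e4 e5 ..
    qed
    finally show ?thesis .
  qed
  define Tall where "Tall = {K. vec.subspace K \<and> vec.dim K = k + 1 \<and> \<delta> \<subseteq> K \<and> vec.dim (K \<inter> UNIV) = k + 1}"
  have cTall: "real (card Tall) = gauss_binom q (n - t) (k - t)"
  proof -
    have dU: "vec.dim (UNIV::('a^'n) set) = CARD('n)" by (rule vec_dim_card)
    have "real (card Tall) = gauss_binom q (vec.dim (UNIV::('a^'n) set) - vec.dim \<delta>) (k + 1 - vec.dim \<delta>)
      * q ^ ((vec.dim (UNIV::('a^'n) set) - (k + 1)) * (k + 1 - (k + 1)))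
      * gauss_binom q (CARD('n) - vec.dim (UNIV::('a^'n) set)) (k + 1 - (k + 1))"
      unfolding Tall_def q_def
      by (rule count_real[OF sd vec.subspace_UNIV]) (use dd tk Nbig dU in auto)
    also have "\<dots> = gauss_binom q (n - t) (k - t)"
      unfolding dU using dd Nn N_def by (simp add: gauss_binom_def)
    finally show ?thesis .
  qed
  have Tall_eq: "Tall = (\<Union>i\<in>{t + 1..k + 1}. T i)"
  proof
    show "Tall \<subseteq> (\<Union>i\<in>{t + 1..k + 1}. T i)"
    proof
      fix K assume "K \<in> Tall"
      then have sK: "vec.subspace K" "vec.dim K = k + 1" "\<delta> \<subseteq> K" unfolding Tall_def by auto
      have "vec.dim \<delta> \<le> vec.dim (K \<inter> Sg)" using sK(3) dSgsub by (intro vec.dim_subset) auto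
      moreover have "vec.dim (K \<inter> Sg) \<le> vec.dim K" by (rule vec.dim_subset) auto
      ultimately show "K \<in> (\<Union>i\<in>{t + 1..k + 1}. T i)" unfolding T_def using sK dd by auto
    qed
  next
    show "(\<Union>i\<in>{t + 1..k + 1}. T i) \<subseteq> Tall" unfolding T_def Tall_def by auto
  qed
  have split: "{t + 1..k + 1} = insert (t + 1) (insert (k + 1) {t + 2..k})" using tk by auto
  have "(\<Sum>i\<in>{t + 1..k + 1}. real (card (T i))) = real (card (T (t + 1))) + real (card (T (k + 1)))
      + (\<Sum>i\<in>{t + 2..k}. real (card (T i)))"
    unfolding split using tk by (simp add: sum.insert)
  moreover have "(\<Sum>i\<in>{t + 1..k + 1}. real (card (T i))) = real (card Tall)"
    unfolding Tall_eq using cardUT[of "{t + 1..k + 1}"] by simp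
  moreover have "(\<Sum>i\<in>{t + 2..k}. real (card (T i))) = (\<Sum>i\<in>{t + 2..k}. f i)"
    using cardT by (intro sum.cong) auto
  moreover have "real (card (T (t + 1))) = q ^ ((k - t + 1) * (k - t)) * gauss_binom q (n - k - 1) (k - t)"
  proof -
    have "real (card (T (t + 1))) = f (t + 1)" using cardT tk by simp
    also have "\<dots> = q ^ ((k - t + 1) * (k - t)) * gauss_binom q (n - k - 1) (k - t)"
    proof -
      have e3: "k + 2 - (t + 1) = k - t + 1" using tk by simp
      have e4: "k + 1 - (t + 1) = k - t" by simp
      have e5: "N - (k + 2) = n - k - 1" using Nn by simp
      show ?thesis unfolding f_def e3 e4 e5 by (simp add: gauss_binom_def)
    qed
    finally show ?thesis .
  qed
  moreover have "real (card (T (k + 1))) = theta q (k - t)"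
  proof -
    have "real (card (T (k + 1))) = f (k + 1)" using cardT tk by simp
    also have "\<dots> = gauss_binom q (k - t + 1) (k - t)"
    proof -
      have e1: "k + 1 - t = k - t + 1" using tk by simp
      have e2: "k + 1 - (t + 1) = k - t" by simp
      show ?thesis unfolding f_def e1 e2 by (simp add: gauss_binom_def)
    qed
    also have "\<dots> = theta q (k - t)" using gauss_theta[OF q1] by blast
    finally show ?thesis .
  qed
  ultimately have sumeq: "(\<Sum>i\<in>{t + 2..k}. f i) = gauss_binom q (n - t) (k - t) - theta q (k - t)
      - q ^ ((k - t + 1) * (k - t)) * gauss_binom q (n - k - 1) (k - t)"
    using cTall by linarith
  show ?thesis using maxi cU reidx sumeq by simp
qed


end
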